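(* Let $S,T\subseteq[r]$. If $S$ dominates $T$, then $T\subseteq S$.
   Context: For $\pi=a_1\cdots a_{r+1}\in S_{r+1}$, its descent set is $\{i\in[r]:a_i>a_{i+1}\}$, and $D(S)$ is the set of permutations in $S_{r+1}$ with descent set $S$. The inversion set is $I(\pi)=\{(a_i,a_j):i<j,\ a_i>a_j\}$; $\pi\le_w\pi'$ iff $I(\pi)\subseteq I(\pi')$ (weak Bruhat order). $S$ dominates $T$ if there is an injection $\phi:D(T)\to D(S)$ with $\pi\le_w\phi(\pi)$ for all $\pi\in D(T)$. *)

theory Defs
  imports Main
begin

text \<open>Permutations of [r+1] = {1..r+1} in one-line notation a_1 ... a_{r+1},
  represented as lists; the list index i-1 holds a_i.\<close>

definition perms :: "nat \<Rightarrow> nat list set" where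
  "perms n = {xs. distinct xs \<and> set xs = {1..n}}"

definition descent_set :: "nat list \<Rightarrow> nat set" where
  "descent_set xs = {i. 1 \<le> i \<and> i < length xs \<and> xs ! (i - 1) > xs ! i}"

definition Dset :: "nat \<Rightarrow> nat set \<Rightarrow> nat list set" where
  "Dset r S = {xs \<in> perms (r + 1). descent_set xs = S}"

definition inv_set :: "nat list \<Rightarrow> (nat \<times> nat) set" where
  "inv_set xs = {(xs ! i, xs ! j) | i j. i < j \<and> j < length xs \<and> xs ! i > xs ! j}"

definition weak_le :: "nat list \<Rightarrow> nat list \<Rightarrow> bool" where
  "weak_le p q \<longleftrightarrow> inv_set p \<subseteq> inv_set q"

definition dominates :: "nat \<Rightarrow> nat set \<Rightarrow> nat set \<Rightarrow> bool" where
  "dominates r S T \<longleftrightarrow>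
     (\<exists>\<phi>. \<phi> ` Dset r T \<subseteq> Dset r S \<and> inj_on \<phi> (Dset r T)
          \<and> (\<forall>\<pi>\<in>Dset r T. weak_le \<pi> (\<phi> \<pi>)))"

end

theory Submission
  imports Defs
begin

lemma perms_len: "xs \<in> perms n \<Longrightarrow> length xs = n"
  unfolding perms_def using distinct_card by fastforce

lemma sep_desc:
  assumes P: "\<pi> \<in> perms n" and Q: "\<sigma> \<in> perms n" and W: "inv_set \<pi> \<subseteq> inv_set \<sigma>"
    and i1: "1 \<le> i" and iN: "i < n"
    and sep: "\<forall>p q. p < i \<and> i \<le> q \<and> q < n \<longrightarrow> \<pi>!p > \<pi>!q"
  shows "i \<in> descent_set \<sigma>"
proof -
  have lp: "length \<pi> = n" and ls: "length \<sigma> = n" using P Q perms_len by auto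
  have dp: "distinct \<pi>" and ds: "distinct \<sigma>" and st: "set \<sigma> = set \<pi>"
    using P Q unfolding perms_def by auto
  define A where "A = set (take i \<pi>)"
  define B where "B = set (drop i \<pi>)"
  have cA: "card A = i" unfolding A_def using dp iN lp
    by (simp add: distinct_card)
  have cB: "card B = n - i" unfolding B_def using dp iN lp
    by (simp add: distinct_card)
  have AB: "set \<sigma> = A \<union> B" unfolding A_def B_def st
    by (metis append_take_drop_id set_append)
  have key: "\<exists>a b. a < b \<and> b < n \<and> \<sigma>!a = x \<and> \<sigma>!b = y \<and> x > y"
    if xA0: "x \<in> A" and yB0: "y \<in> B" for x y
  proof -
    obtain p where "p < length (take i \<pi>)" "take i \<pi> ! p = x"
      using xA0[unfolded A_def in_set_conv_nth] by blast
    then have p: "p < i" "\<pi>!p = x" by auto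
    obtain q where "q < length (drop i \<pi>)" "drop i \<pi> ! q = y"
      using yB0[unfolded B_def in_set_conv_nth] by blast
    then have q: "q < n - i" "\<pi>!(i+q) = y" using lp iN by auto
    have "\<pi>!p > \<pi>!(i+q)" using sep p q iN by auto
    moreover have "p < i + q" "i + q < length \<pi>" using p q lp iN by auto
    ultimately have "(\<pi>!p, \<pi>!(i+q)) \<in> inv_set \<pi>" unfolding inv_set_def
      by blast
    then have "(x, y) \<in> inv_set \<pi>" using p q by simp
    with W have "(x, y) \<in> inv_set \<sigma>" by auto
    then show ?thesis unfolding inv_set_def using ls by auto
  qed
  have uniq: "\<And>a b. a < n \<Longrightarrow> b < n \<Longrightarrow> \<sigma>!a = \<sigma>!b \<Longrightarrow> a = b"
    using ds ls nth_eq_iff_index_eq by blast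
  have c1: "\<sigma>!(i-1) \<in> A"
  proof (rule ccontr)
    assume "\<sigma>!(i-1) \<notin> A"
    moreover have "\<sigma>!(i-1) \<in> set \<sigma>" using i1 iN ls by auto
    ultimately have yB: "\<sigma>!(i-1) \<in> B" using AB by auto
    have "A \<subseteq> set (take (i-1) \<sigma>)"
    proof
      fix x assume "x \<in> A"
      from key[OF this yB] obtain a b where ab: "a < b" "b < n" "\<sigma>!a = x" "\<sigma>!b = \<sigma>!(i-1)"
        by blast
      have "b = i - 1" using uniq ab i1 iN by auto
      then show "x \<in> set (take (i-1) \<sigma>)" using ab ls
        by (auto simp: in_set_conv_nth intro!: exI[of _ a])
    qed
    then have "card A \<le> i - 1"
    proof -
      have "card (set (take (i-1) \<sigma>)) \<le> i - 1"
        using card_length[of "take (i-1) \<sigma>"] by simp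
      with \<open>A \<subseteq> set (take (i-1) \<sigma>)\<close> show ?thesis
        by (meson List.finite_set card_mono order_trans)
    qed
    with cA i1 show False by simp
  qed
  have c2: "\<sigma>!i \<in> B"
  proof (rule ccontr)
    assume "\<sigma>!i \<notin> B"
    moreover have "\<sigma>!i \<in> set \<sigma>" using iN ls by auto
    ultimately have xA: "\<sigma>!i \<in> A" using AB by auto
    have "B \<subseteq> set (drop (i+1) \<sigma>)"
    proof
      fix y assume "y \<in> B"
      from key[OF xA this] obtain a b where ab: "a < b" "b < n" "\<sigma>!a = \<sigma>!i" "\<sigma>!b = y"
        by blast
      have "a = i" using uniq ab iN by auto
      then show "y \<in> set (drop (i+1) \<sigma>)" using ab ls
        by (auto simp: in_set_conv_nth intro!: exI[of _ "b - (i+1)"])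
    qed
    then have "card B \<le> n - (i+1)"
    proof -
      have "card (set (drop (i+1) \<sigma>)) \<le> n - (i+1)"
        using card_length[of "drop (i+1) \<sigma>"] ls by simp
      with \<open>B \<subseteq> set (drop (i+1) \<sigma>)\<close> show ?thesis
        by (meson List.finite_set card_mono order_trans)
    qed
    with cB iN show False by simp
  qed
  from key[OF c1 c2] have "\<sigma>!(i-1) > \<sigma>!i" by blast
  then show ?thesis unfolding descent_set_def using i1 iN ls by auto
qed

lemma perm_intro:
  assumes "distinct ys" "length ys = n" "set ys \<subseteq> {1..n}"
  shows "ys \<in> perms n"
proof -
  have "card (set ys) = card {1..n}" using assms distinct_card by fastforce
  then have "set ys = {1..n}" using assms(3) by (simp add: card_subset_eq)
  then show ?thesis using assms unfolding perms_def by auto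
qed

lemma desc_map:
  assumes "strict_mono g"
  shows "descent_set (map g xs) = descent_set xs"
  unfolding descent_set_def using strict_mono_less[OF assms] by auto

lemma desc_snoc:
  assumes "xs \<noteq> []"
  shows "descent_set (xs @ [z]) = descent_set xs \<union> (if last xs > z then {length xs} else {})"
proof -
  have l: "last xs = xs ! (length xs - 1)" using assms by (simp add: last_conv_nth)
  show ?thesis
  proof (rule set_eqI)
    fix k
    consider "k < length xs" | "k = length xs" | "k > length xs" by linarith
    then show "k \<in> descent_set (xs @ [z]) \<longleftrightarrow>
      k \<in> descent_set xs \<union> (if last xs > z then {length xs} else {})"
    proof cases
      case 1
      then show ?thesis unfolding descent_set_def by (auto simp: nth_append)
    next
      case 2
      have "length xs \<ge> 1" using assms by (cases xs) auto
      then show ?thesis unfolding descent_set_def using 2 l by (auto simp: nth_append)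
    next
      case 3
      then show ?thesis unfolding descent_set_def by auto
    qed
  qed
qed

lemma exists_max:
  "T \<subseteq> {1..r} \<Longrightarrow> \<exists>xs. xs \<in> perms (Suc r) \<and> descent_set xs = T \<and>
     (\<forall>i\<in>T. \<forall>p q. p < i \<and> i \<le> q \<and> q < Suc r \<longrightarrow> xs!q < xs!p)"
proof (induction r arbitrary: T)
  case 0
  then have "T = {}" by auto
  moreover have "[1::nat] \<in> perms (Suc 0)" unfolding perms_def by auto
  moreover have "descent_set [1] = {}" unfolding descent_set_def by auto
  ultimately show ?case by blast
next
  case (Suc r)
  define T' where "T' = T - {Suc r}"
  have "T' \<subseteq> {1..r}" using Suc.prems unfolding T'_def by auto
  from Suc.IH[OF this] obtain xs where xs: "xs \<in> perms (Suc r)" "descent_set xs = T'"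
    and sep: "\<forall>i\<in>T'. \<forall>p q. p < i \<and> i \<le> q \<and> q < Suc r \<longrightarrow> xs!q < xs!p" by blast
  have lx: "length xs = Suc r" using xs perms_len by auto
  have dx: "distinct xs" and sx: "set xs = {1..Suc r}" using xs unfolding perms_def by auto
  have ne: "xs \<noteq> []" using lx by auto
  show ?case
  proof (cases "Suc r \<in> T")
    case True
    define ys where "ys = map Suc xs @ [1]"
    have "ys \<in> perms (Suc (Suc r))"
      unfolding ys_def by (rule perm_intro) (use dx sx lx in \<open>auto simp: distinct_map\<close>)
    moreover have "descent_set ys = T"
    proof -
      have "last (map Suc xs) > 1" using ne sx
        by (metis One_nat_def Suc_le_eq atLeastAtMost_iff last_in_set last_map not_less_eq_eq)
      then have "descent_set ys = T' \<union> {Suc r}" unfolding ys_def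
        using desc_snoc[of "map Suc xs" 1] ne desc_map[of Suc xs] xs(2) lx strict_mono_Suc_iff
        by auto
      then show ?thesis using True T'_def by auto
    qed
    moreover have "\<forall>i\<in>T. \<forall>p q. p < i \<and> i \<le> q \<and> q < Suc (Suc r) \<longrightarrow> ys!q < ys!p"
    proof (intro ballI allI impI)
      fix i p q assume iT: "i \<in> T" and pq: "p < i \<and> i \<le> q \<and> q < Suc (Suc r)"
      have iR: "i \<le> Suc r" using iT Suc.prems by auto
      show "ys!q < ys!p"
      proof (cases "q = Suc r")
        case True
        have "xs!p \<in> set xs" using pq iR lx by auto
        then have "xs!p \<ge> 1" using sx by auto
        then show ?thesis using True pq iR lx unfolding ys_def by (auto simp: nth_append)
      next
        case False
        then have "i \<in> T'" using pq iT unfolding T'_def by auto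
        then have "xs!q < xs!p" using sep pq False by auto
        then show ?thesis using pq False lx unfolding ys_def by (auto simp: nth_append)
      qed
    qed
    ultimately show ?thesis by blast
  next
    case False
    then have TT: "T' = T" unfolding T'_def by auto
    define c where "c = last xs"
    have cx: "c = xs ! r" unfolding c_def using ne lx by (simp add: last_conv_nth)
    have cr: "c \<in> {1..Suc r}" using ne sx unfolding c_def using last_in_set by blast
    define g where "g = (\<lambda>v. if v > c then Suc v else v)"
    have sg: "strict_mono g" unfolding strict_mono_def g_def by auto
    define ys where "ys = map g xs @ [Suc c]"
    have "ys \<in> perms (Suc (Suc r))"
      unfolding ys_def
    proof (rule perm_intro)
      have "Suc c \<notin> g ` set xs" unfolding g_def by auto
      then show "distinct (map g xs @ [Suc c])"
        using dx strict_mono_imp_inj_on[OF sg] by (auto simp: distinct_map inj_on_subset)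
      show "length (map g xs @ [Suc c]) = Suc (Suc r)" using lx by simp
      show "set (map g xs @ [Suc c]) \<subseteq> {1..Suc (Suc r)}" using sx cr unfolding g_def by auto
    qed
    moreover have "descent_set ys = T"
    proof -
      have "last (map g xs) = c" using ne unfolding c_def g_def by (simp add: last_map)
      then show ?thesis unfolding ys_def
        using desc_snoc[of "map g xs" "Suc c"] ne desc_map[OF sg, of xs] xs(2) TT by auto
    qed
    moreover have "\<forall>i\<in>T. \<forall>p q. p < i \<and> i \<le> q \<and> q < Suc (Suc r) \<longrightarrow> ys!q < ys!p"
    proof (intro ballI allI impI)
      fix i p q assume iT: "i \<in> T" and pq: "p < i \<and> i \<le> q \<and> q < Suc (Suc r)"
      have iT': "i \<in> T'" using iT TT by auto
      have iR: "i \<le> r" using iT' \<open>T' \<subseteq> {1..r}\<close> by auto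
      show "ys!q < ys!p"
      proof (cases "q = Suc r")
        case True
        have xr: "xs!r < xs!p" using sep iT' pq iR by auto
        have "xs!p \<in> set xs" using pq iR lx by auto
        then show ?thesis using xr True pq iR lx unfolding ys_def cx g_def by (auto simp: nth_append)
      next
        case False
        then have "xs!q < xs!p" using sep iT' pq by auto
        then have "g (xs!q) < g (xs!p)" using sg strict_mono_less by blast
        then show ?thesis using pq False lx unfolding ys_def by (auto simp: nth_append)
      qed
    qed
    ultimately show ?thesis by blast
  qed
qed

theorem proposition5p4:
  fixes r :: nat and S T :: "nat set"
  assumes "S \<subseteq> {1..r}" and "T \<subseteq> {1..r}"
    and "dominates r S T"
  shows "T \<subseteq> S"
proof
  fix i assume iT: "i \<in> T"
  obtain \<phi> where phi: "\<phi> ` Dset r T \<subseteq> Dset r S" "\<forall>\<pi>\<in>Dset r T. weak_le \<pi> (\<phi> \<pi>)"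
    using assms(3) unfolding dominates_def by blast
  obtain xs where xs: "xs \<in> perms (Suc r)" "descent_set xs = T"
    and sep: "\<forall>i\<in>T. \<forall>p q. p < i \<and> i \<le> q \<and> q < Suc r \<longrightarrow> xs!q < xs!p"
    using exists_max[OF assms(2)] by blast
  have xD: "xs \<in> Dset r T" using xs unfolding Dset_def by auto
  then have sD: "\<phi> xs \<in> Dset r S" using phi(1) by auto
  have "i \<in> descent_set (\<phi> xs)"
  proof (rule sep_desc[of xs "Suc r"])
    show "xs \<in> perms (Suc r)" by fact
    show "\<phi> xs \<in> perms (Suc r)" using sD unfolding Dset_def by auto
    show "inv_set xs \<subseteq> inv_set (\<phi> xs)" using phi(2) xD unfolding weak_le_def by auto
    show "1 \<le> i" "i < Suc r" using iT assms(2) by auto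
    show "\<forall>p q. p < i \<and> i \<le> q \<and> q < Suc r \<longrightarrow> xs ! q < xs ! p" using sep iT by blast
  qed
  then show "i \<in> S" using sD unfolding Dset_def by auto
qed

end
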